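(* Let $k\ge 1$, let $j_1,\dots,j_h\le k$ be distinct positive integers and let $a_1,\dots,a_h$ be positive integers. Then \[ \mathbb{E}\, |\mathscr{L}(\mathbf{X}_k)|\, X_{j_1}^{a_1}\cdots X_{j_h}^{a_h} \le \frac{C_{a_1,\dots,a_h}}{j_1\cdots j_h}\,\mathbb{E}|\mathscr{L}(\mathbf{X}_k)|, \] where $C_{a_1,\dots,a_h} = \prod_{i=1}^h (B_{a_i}+B_{a_i+1})$ and $B_m$ denotes the $m$-th Bell number (so $B_1=1,B_2=2,B_3=5,\dots$). In particular one may take $C_1=3$.
   Context: Let $X_1,X_2,\dots$ be independent random variables with $X_j$ Poisson distributed with parameter $1/j$, and $\mathbf{X}_k=(X_1,\dots,X_k)$. For a finite list $\mathbf{c}=(c_1,\dots,c_k)$ of non-negative integers, $\mathscr{L}(\mathbf{c}) = \{m_1+2m_2+\cdots+km_k : 0\le m_j\le c_j \text{ for } j=1,\dots,k\}$, and $|\cdot|$ denotes cardinality. The $m$-th Bell number $B_m$ equals $\mathbb{E}X^m$ for $X$ Poisson with parameter $1$. *)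

theory Defs
  imports "HOL-Probability.Probability"
begin

definition Lset :: "nat \<Rightarrow> (nat \<Rightarrow> nat) \<Rightarrow> nat set" where
  "Lset k c = {(\<Sum>j=1..k. j * m j) | m. \<forall>j\<in>{1..k}. m j \<le> c j}"

definition Bell :: "nat \<Rightarrow> real" where
  "Bell m = measure_pmf.expectation (poisson_pmf 1) (\<lambda>n. real n ^ m)"

end

theory Submission
  imports Defs
begin


definition mom :: "nat \<Rightarrow> real \<Rightarrow> ennreal" where
  "mom a l = (\<integral>\<^sup>+ n. ennreal (real n ^ a) \<partial>measure_pmf (poisson_pmf l))"

lemma poisson_shift:
  assumes l: "0 < l"
  shows "(\<integral>\<^sup>+ n. ennreal (real n) * f n \<partial>measure_pmf (poisson_pmf l))
       = ennreal l * (\<integral>\<^sup>+ n. f (Suc n) \<partial>measure_pmf (poisson_pmf l))"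
proof -
  let ?g = "\<lambda>n. ennreal (pmf (poisson_pmf l) n) * (ennreal (real n) * f n)"
  have "(\<integral>\<^sup>+ n. ennreal (real n) * f n \<partial>measure_pmf (poisson_pmf l)) = (\<Sum>n. ?g n)"
    by (simp add: nn_integral_measure_pmf nn_integral_count_space_nat)
  also have "\<dots> = (\<Sum>n. ?g (n + 1)) + (\<Sum>n<1. ?g n)"
    by (rule suminf_offset) (rule summableI)
  also have "(\<Sum>n<1. ?g n) = 0" by simp
  also have "(\<lambda>n. ?g (n + 1)) = (\<lambda>n. ennreal l * (ennreal (pmf (poisson_pmf l) n) * f (Suc n)))"
  proof
    fix n
    have e: "pmf (poisson_pmf l) (Suc n) * real (Suc n) = l * pmf (poisson_pmf l) n"
      proof -
      have "pmf (poisson_pmf l) (Suc n) * real (Suc n) = l ^ Suc n / (real (Suc n) * fact n) * exp (-l) * real (Suc n)"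
        by (simp only: pmf_poisson[OF l] fact_Suc of_nat_mult)
      also have "\<dots> = l * (l ^ n / fact n * exp (-l))"
        by (simp del: of_nat_Suc)
      finally show ?thesis by (simp only: pmf_poisson[OF l])
    qed
    have "?g (n+1) = (ennreal (pmf (poisson_pmf l) (Suc n)) * ennreal (real (Suc n))) * f (Suc n)"
      by (simp only: Suc_eq_plus1[symmetric] mult.assoc)
    also have "\<dots> = ennreal (pmf (poisson_pmf l) (Suc n) * real (Suc n)) * f (Suc n)"
      by (subst ennreal_mult) auto
    also have "\<dots> = ennreal l * (ennreal (pmf (poisson_pmf l) n) * f (Suc n))"
      using l by (simp only: e ennreal_mult mult.assoc pmf_nonneg less_imp_le)
    finally show "?g (n+1) = ennreal l * (ennreal (pmf (poisson_pmf l) n) * f (Suc n))" .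
  qed
  also have "(\<Sum>n. ennreal l * (ennreal (pmf (poisson_pmf l) n) * f (Suc n))) + 0
      = ennreal l * (\<integral>\<^sup>+ n. f (Suc n) \<partial>measure_pmf (poisson_pmf l))"
    by (simp add: nn_integral_measure_pmf nn_integral_count_space_nat)
  finally show ?thesis .
qed

lemma mom_0: "mom 0 l = 1"
  by (simp add: mom_def measure_pmf.emeasure_space_1)

lemma mom_Suc:
  assumes l: "0 < l"
  shows "mom (Suc a) l = ennreal l * (\<Sum>b\<le>a. of_nat (a choose b) * mom b l)"
proof -
  have "mom (Suc a) l = (\<integral>\<^sup>+ n. ennreal (real n) * ennreal (real n ^ a) \<partial>measure_pmf (poisson_pmf l))"
    unfolding mom_def by (intro nn_integral_cong) (simp add: ennreal_mult[symmetric])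
  also have "\<dots> = ennreal l * (\<integral>\<^sup>+ n. ennreal (real (Suc n) ^ a) \<partial>measure_pmf (poisson_pmf l))"
    by (rule poisson_shift[OF l])
  also have "(\<integral>\<^sup>+ n. ennreal (real (Suc n) ^ a) \<partial>measure_pmf (poisson_pmf l))
     = (\<integral>\<^sup>+ n. (\<Sum>b\<le>a. of_nat (a choose b) * ennreal (real n ^ b)) \<partial>measure_pmf (poisson_pmf l))"
  proof (intro nn_integral_cong)
    fix n
    have "real (Suc n) ^ a = (\<Sum>b\<le>a. real (a choose b) * real n ^ b)"
      using binomial_ring[of "real n" 1 a] by (simp add: add.commute)
    then show "ennreal (real (Suc n) ^ a) = (\<Sum>b\<le>a. of_nat (a choose b) * ennreal (real n ^ b))"
      by (simp add: ennreal_mult[symmetric] ennreal_of_nat_eq_real_of_nat)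
  qed
  also have "\<dots> = (\<Sum>b\<le>a. of_nat (a choose b) * mom b l)"
    unfolding mom_def
    by (subst nn_integral_sum) (auto simp: nn_integral_cmult)
  finally show ?thesis .
qed

lemma mom_le:
  assumes l: "0 < l" "l \<le> 1"
  shows "mom a l \<le> mom a 1 \<and> (a \<ge> 1 \<longrightarrow> mom a l \<le> ennreal l * mom a 1)"
proof (induction a rule: less_induct)
  case (less a)
  show ?case
  proof (cases a)
    case 0 then show ?thesis by (simp add: mom_0)
  next
    case (Suc c)
    have IH: "mom b l \<le> mom b 1" if "b \<le> c" for b using less[of b] Suc that by auto
    have "mom a l = ennreal l * (\<Sum>b\<le>c. of_nat (c choose b) * mom b l)"
      using Suc mom_Suc[OF l(1)] by simp
    also have "\<dots> \<le> ennreal l * (\<Sum>b\<le>c. of_nat (c choose b) * mom b 1)"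
      by (intro mult_left_mono sum_mono IH) auto
    also have "\<dots> = ennreal l * mom a 1"
      using Suc mom_Suc[of 1 c] by simp
    finally have 1: "mom a l \<le> ennreal l * mom a 1" .
    also have "\<dots> \<le> 1 * mom a 1"
      using l by (intro mult_right_mono) (auto simp: ennreal_le_1)
    finally show ?thesis using 1 by simp
  qed
qed

lemma mom_fin: "mom a 1 < top"
proof (induction a rule: less_induct)
  case (less a)
  show ?case
  proof (cases a)
    case 0 then show ?thesis by (simp add: mom_0)
  next
    case (Suc c)
    have "mom a 1 = (\<Sum>b\<le>c. of_nat (c choose b) * mom b 1)"
      using Suc mom_Suc[of 1 c] by simp
    also have "\<dots> < top"
      using less Suc by (auto simp: ennreal_mult_less_top of_nat_less_top)
    finally show ?thesis .
  qed
qed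

lemma poisson_integrable:
  assumes l: "0 < l" "l \<le> 1"
  shows "integrable (measure_pmf (poisson_pmf l)) (\<lambda>n. real n ^ a)"
proof (rule integrableI_nonneg)
  show "(\<integral>\<^sup>+ n. ennreal (real n ^ a) \<partial>measure_pmf (poisson_pmf l)) < \<infinity>"
    using mom_le[OF l, of a] mom_fin[of a] unfolding mom_def by auto
qed auto

lemma poisson_integral:
  assumes l: "0 < l" "l \<le> 1"
  shows "measure_pmf.expectation (poisson_pmf l) (\<lambda>n. real n ^ a) = enn2real (mom a l)"
  unfolding mom_def by (rule integral_eq_nn_integral) auto

lemma Bell_mom: "Bell a = enn2real (mom a 1)"
  unfolding Bell_def using poisson_integral[of 1 a] by simp

lemma poisson_moment_le:
  assumes l: "0 < l" "l \<le> 1" and a: "a \<ge> 1"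
  shows "measure_pmf.expectation (poisson_pmf l) (\<lambda>n. real n ^ a) \<le> l * Bell a"
proof -
  have "enn2real (mom a l) \<le> enn2real (ennreal l * mom a 1)"
    using mom_le[OF l, of a] a mom_fin[of a]
    by (intro enn2real_mono) (auto simp: ennreal_mult_less_top)
  also have "\<dots> = l * Bell a" using l by (simp add: enn2real_mult Bell_mom)
  finally show ?thesis using poisson_integral[OF l] by simp
qed

lemma poisson_G_le:
  assumes l: "0 < l" "l \<le> 1" and a: "a \<ge> 1"
  shows "integrable (measure_pmf (poisson_pmf l)) (\<lambda>n. (real n + 1) * real n ^ a)"
    and "measure_pmf.expectation (poisson_pmf l) (\<lambda>n. (real n + 1) * real n ^ a)
           \<le> l * (Bell a + Bell (a + 1))"
proof -
  have eq: "(\<lambda>n. (real n + 1) * real n ^ a) = (\<lambda>n. real n ^ (a+1) + real n ^ a)"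
    by (auto simp: algebra_simps)
  show "integrable (measure_pmf (poisson_pmf l)) (\<lambda>n. (real n + 1) * real n ^ a)"
    unfolding eq by (intro Bochner_Integration.integrable_add poisson_integrable[OF l])
  have "measure_pmf.expectation (poisson_pmf l) (\<lambda>n. (real n + 1) * real n ^ a)
     = measure_pmf.expectation (poisson_pmf l) (\<lambda>n. real n ^ (a+1))
       + measure_pmf.expectation (poisson_pmf l) (\<lambda>n. real n ^ a)"
    unfolding eq by (rule Bochner_Integration.integral_add; rule poisson_integrable[OF l])
  also have "\<dots> \<le> l * Bell (a+1) + l * Bell a"
    using poisson_moment_le[OF l, of a] poisson_moment_le[OF l, of "a+1"] a by auto
  finally show "measure_pmf.expectation (poisson_pmf l) (\<lambda>n. (real n + 1) * real n ^ a)
           \<le> l * (Bell a + Bell (a + 1))" by (simp add: algebra_simps)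
qed



lemma Lset_sub: "Lset k c \<subseteq> {..(\<Sum>j=1..k. j * c j)}"
  unfolding Lset_def by (auto intro!: sum_mono mult_le_mono2)

lemma Lset_finite: "finite (Lset k c)"
  using Lset_sub finite_subset by blast

lemma card_Lset_le: "card (Lset k c) \<le> 1 + (\<Sum>j=1..k. j * c j)"
  using card_mono[OF _ Lset_sub[of k c]] by simp

lemma Lset_cong: "(\<And>j. j \<in> {1..k} \<Longrightarrow> c j = d j) \<Longrightarrow> Lset k c = Lset k d"
  unfolding Lset_def by auto

lemma Lset_mono:
  assumes a: "\<And>j. j \<in> {1..k} \<Longrightarrow> c j \<le> d j" shows "Lset k c \<subseteq> Lset k d"
proof
  fix x assume "x \<in> Lset k c"
  then obtain m where x: "x = (\<Sum>j=1..k. j * m j)" and m: "\<forall>j\<in>{1..k}. m j \<le> c j"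
    unfolding Lset_def by auto
  have "\<forall>j\<in>{1..k}. m j \<le> d j" using m a le_trans by blast
  then show "x \<in> Lset k d" unfolding Lset_def using x by blast
qed

lemma card_Lset_split:
  assumes J: "J \<subseteq> {1..k}"
  shows "card (Lset k c) \<le> (\<Prod>j\<in>J. c j + 1) * card (Lset k (\<lambda>j. if j \<in> J then 0 else c j))"
proof -
  have fJ: "finite J" using J finite_subset by blast
  let ?S = "PiE J (\<lambda>j. {..c j})"
  let ?T = "Lset k (\<lambda>j. if j \<in> J then 0 else c j)"
  let ?f = "\<lambda>(m, t). (\<Sum>j\<in>J. j * m j) + t"
  have sub: "Lset k c \<subseteq> ?f ` (?S \<times> ?T)"
  proof
    fix x assume "x \<in> Lset k c"
    then obtain m where x: "x = (\<Sum>j=1..k. j * m j)" and m: "\<forall>j\<in>{1..k}. m j \<le> c j"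
      unfolding Lset_def by auto
    define m0 where "m0 j = (if j \<in> J then 0 else m j)" for j
    have "(\<Sum>j=1..k. j * m j) = (\<Sum>j=1..k. (if j \<in> J then j * m j else 0) + j * m0 j)"
      by (intro sum.cong) (auto simp: m0_def)
    also have "\<dots> = (\<Sum>j=1..k. (if j \<in> J then j * m j else 0)) + (\<Sum>j=1..k. j * m0 j)"
      by (rule sum.distrib)
    also have "(\<Sum>j=1..k. (if j \<in> J then j * m j else 0)) = (\<Sum>j\<in>{1..k} \<inter> J. j * m j)"
      by (rule sum.inter_restrict[symmetric]) simp
    also have "{1..k} \<inter> J = J" using J by auto
    finally have x2: "x = (\<Sum>j\<in>J. j * m j) + (\<Sum>j=1..k. j * m0 j)" using x by simp
    have "(restrict m J, \<Sum>j=1..k. j * m0 j) \<in> ?S \<times> ?T"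
    proof (rule SigmaI)
      show "restrict m J \<in> ?S" using m J by auto
      show "(\<Sum>j=1..k. j * m0 j) \<in> ?T"
        unfolding Lset_def using m by (intro CollectI exI[of _ m0]) (auto simp: m0_def)
    qed
    moreover have "x = ?f (restrict m J, \<Sum>j=1..k. j * m0 j)"
      using x2 by simp
    ultimately show "x \<in> ?f ` (?S \<times> ?T)" by (rule rev_image_eqI)
  qed
  have "card (Lset k c) \<le> card (?f ` (?S \<times> ?T))"
    by (rule card_mono[OF _ sub]) (auto intro!: finite_imageI finite_cartesian_product
        finite_PiE fJ Lset_finite)
  also have "\<dots> \<le> card (?S \<times> ?T)" by (rule card_image_le) (auto intro!: finite_cartesian_product
        finite_PiE fJ Lset_finite)
  also have "\<dots> = card ?S * card ?T" by (rule card_cartesian_product)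
  also have "card ?S = (\<Prod>j\<in>J. c j + 1)" using fJ by (simp add: card_PiE)
  finally show ?thesis .
qed



lemma meas_fin:
  fixes f :: "(nat \<Rightarrow> nat) \<Rightarrow> real"
  assumes B: "finite B"
  shows "f \<in> borel_measurable (PiM B (\<lambda>_. count_space (UNIV::nat set)))"
proof (rule measurableI)
  let ?P = "PiM B (\<lambda>_. count_space (UNIV::nat set))"
  fix A :: "real set"
  let ?S = "f -` A \<inter> space ?P"
  have sp: "space ?P = PiE B (\<lambda>_. UNIV)" by (simp add: space_PiM)
  have "?S = (\<Union>r\<in>?S. PiE B (\<lambda>j. {r j}))"
  proof
    show "?S \<subseteq> (\<Union>r\<in>?S. PiE B (\<lambda>j. {r j}))"
    proof
      fix r assume r: "r \<in> ?S"
      then have "r \<in> PiE B (\<lambda>j. {r j})" using sp by (auto simp: PiE_def)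
      then show "r \<in> (\<Union>r\<in>?S. PiE B (\<lambda>j. {r j}))" using r by blast
    qed
    show "(\<Union>r\<in>?S. PiE B (\<lambda>j. {r j})) \<subseteq> ?S"
    proof
      fix y assume "y \<in> (\<Union>r\<in>?S. PiE B (\<lambda>j. {r j}))"
      then obtain r where r: "r \<in> ?S" and y: "y \<in> PiE B (\<lambda>j. {r j})" by blast
      have "r \<in> extensional B" using r sp by (auto simp: PiE_def)
      then have "y = r" using y by (auto simp: PiE_def extensional_def fun_eq_iff)
      then show "y \<in> ?S" using r by simp
    qed
  qed
  also have "\<dots> \<in> sets ?P"
  proof (rule sets.countable_UN')
    have "countable (PiE B (\<lambda>_::nat. UNIV :: nat set))"
      using B by (intro countable_PiE) auto
    then show "countable ?S" using sp by (auto intro: countable_subset)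
    show "(\<lambda>r. PiE B (\<lambda>j. {r j})) ` ?S \<subseteq> sets ?P"
      using B by (auto intro!: sets_PiM_I_finite)
  qed
  finally show "?S \<in> sets ?P" .
qed auto



theorem lemma3p3:
  fixes M :: "'a measure" and X :: "nat \<Rightarrow> 'a \<Rightarrow> nat"
    and k h :: nat and js as :: "nat \<Rightarrow> nat"
  assumes "prob_space M"
    and "\<And>j. j \<ge> 1 \<Longrightarrow> X j \<in> measurable M (count_space UNIV)"
    and "prob_space.indep_vars M (\<lambda>_. count_space UNIV) X {1..}"
    and "\<And>j. j \<ge> 1 \<Longrightarrow>
           distr M (count_space UNIV) (X j) = measure_pmf (poisson_pmf (1 / real j))"
    and "k \<ge> 1"
    and "inj_on js {..<h}"
    and "\<And>i. i < h \<Longrightarrow> 1 \<le> js i \<and> js i \<le> k"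
    and "\<And>i. i < h \<Longrightarrow> as i \<ge> 1"
  shows "prob_space.expectation M
           (\<lambda>\<omega>. real (card (Lset k (\<lambda>j. X j \<omega>))) * (\<Prod>i<h. real (X (js i) \<omega>) ^ as i))
         \<le> (\<Prod>i<h. Bell (as i) + Bell (as i + 1)) / (\<Prod>i<h. real (js i))
             * prob_space.expectation M (\<lambda>\<omega>. real (card (Lset k (\<lambda>j. X j \<omega>))))"
proof -
  interpret P: prob_space M by (rule assms(1))
  note ind = assms(3)
  define K where "K = {1..k}"
  define J where "J = js ` {..<h}"
  define B where "B = K - J"
  have JK: "J \<subseteq> K" using assms(7) by (auto simp: J_def K_def)
  have fK: "finite K" by (simp add: K_def)
  have fJ: "finite J" using JK fK finite_subset by blast
  have fB: "finite B" using fK by (simp add: B_def)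
  have K1: "K \<subseteq> {1..}" by (auto simp: K_def)
  have J1: "J \<subseteq> {1..}" using JK K1 by blast
  have JB: "J \<inter> B = {}" by (auto simp: B_def)
  have B1: "B \<subseteq> {1..}" using K1 by (auto simp: B_def)
  define e where "e j = as (the_inv_into {..<h} js j)" for j
  have e_js: "e (js i) = as i" if "i < h" for i
    using the_inv_into_f_f[OF assms(6)] that by (simp add: e_def)
  have eJ: "e j \<ge> 1" if "j \<in> J" for j using that e_js assms(8) by (auto simp: J_def)
  have measX: "X j \<in> measurable M (count_space UNIV)" if "j \<in> K" for j
    using assms(2) that by (auto simp: K_def)

  have transfer: "integrable M (\<lambda>\<omega>. g (X j \<omega>)) \<and>
      integral\<^sup>L M (\<lambda>\<omega>. g (X j \<omega>)) = measure_pmf.expectation (poisson_pmf (1 / real j)) g"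
    if j: "j \<ge> 1" and g: "integrable (measure_pmf (poisson_pmf (1 / real j))) g" for j and g :: "nat \<Rightarrow> real"
  proof
    have mX: "X j \<in> measurable M (count_space UNIV)" using assms(2) j by auto
    have "integrable (distr M (count_space UNIV) (X j)) g" using g assms(4)[OF j] by simp
    then show "integrable M (\<lambda>\<omega>. g (X j \<omega>))"
      by (subst (asm) integrable_distr_eq[OF mX]) auto
    have "integral\<^sup>L (distr M (count_space UNIV) (X j)) g = integral\<^sup>L M (\<lambda>\<omega>. g (X j \<omega>))"
      by (rule integral_distr[OF mX]) auto
    then show "integral\<^sup>L M (\<lambda>\<omega>. g (X j \<omega>)) = measure_pmf.expectation (poisson_pmf (1 / real j)) g"
      using assms(4)[OF j] by simp
  qed
  have lam: "0 < 1 / real j" "1 / real j \<le> 1" if "j \<ge> 1" for j :: nat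
    using that by auto

  define Lc where "Lc c = real (card (Lset k c))" for c
  define FB where "FB r = Lc (\<lambda>j. if j \<in> B then r j else 0)" for r :: "nat \<Rightarrow> nat"
  define FK where "FK r = Lc (\<lambda>j. if j \<in> K then r j else 0)" for r :: "nat \<Rightarrow> nat"
  define HK where "HK r = Lc (\<lambda>j. if j \<in> K then r j else 0) * (\<Prod>i<h. real (r (js i)) ^ as i)"
    for r :: "nat \<Rightarrow> nat"
  define GJ where "GJ r = (\<Prod>j\<in>J. (real (r j) + 1) * real (r j) ^ e j)" for r :: "nat \<Rightarrow> nat"
  define YJ where "YJ \<omega> = restrict (\<lambda>i. X i \<omega>) J" for \<omega>
  define YB where "YB \<omega> = restrict (\<lambda>i. X i \<omega>) B" for \<omega>
  define YK where "YK \<omega> = restrict (\<lambda>i. X i \<omega>) K" for \<omega>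
  define Z where "Z j \<omega> = (real (X j \<omega>) + 1) * real (X j \<omega>) ^ e j" for j \<omega>
  define G where "G \<omega> = GJ (YJ \<omega>)" for \<omega>
  define L0 where "L0 \<omega> = FB (YB \<omega>)" for \<omega>
  define L where "L \<omega> = real (card (Lset k (\<lambda>j. X j \<omega>)))" for \<omega>
  define LHS where "LHS \<omega> = real (card (Lset k (\<lambda>j. X j \<omega>))) * (\<Prod>i<h. real (X (js i) \<omega>) ^ as i)" for \<omega>

  have measY: "YJ \<in> measurable M (PiM J (\<lambda>_. count_space UNIV))"
     "YB \<in> measurable M (PiM B (\<lambda>_. count_space UNIV))"
     "YK \<in> measurable M (PiM K (\<lambda>_. count_space UNIV))"
    unfolding YJ_def YB_def YK_def using measX JK
    by (auto intro!: measurable_restrict simp: B_def)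

  have indGL: "P.indep_var borel (GJ \<circ> YJ) borel (FB \<circ> YB)"
    unfolding YJ_def YB_def
    by (rule P.indep_var_compose[OF P.indep_var_restrict[OF ind]])
       (use J1 B1 fJ fB JB in \<open>auto intro!: meas_fin\<close>)
  have G_eq: "G = (\<lambda>\<omega>. \<Prod>j\<in>J. Z j \<omega>)"
    by (auto simp: G_def GJ_def YJ_def Z_def intro!: prod.cong)
  have indZ: "P.indep_vars (\<lambda>_. borel) Z J"
  proof -
    have "P.indep_vars (\<lambda>_. borel) (\<lambda>j \<omega>. (\<lambda>n. (real n + 1) * real n ^ e j) (X j \<omega>)) {1..}"
      by (rule P.indep_vars_compose2[OF ind]) auto
    then show ?thesis unfolding Z_def using P.indep_vars_subset J1 by blast
  qed
  have Zj: "integrable M (Z j) \<and> integral\<^sup>L M (Z j) \<le> 1 / real j * (Bell (e j) + Bell (e j + 1))"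
    if "j \<in> J" for j
  proof -
    have j: "j \<ge> 1" using that J1 by auto
    note pg = poisson_G_le[OF lam[OF j] eJ[OF that]]
    have tr: "integrable M (\<lambda>\<omega>. (real (X j \<omega>) + 1) * real (X j \<omega>) ^ e j) \<and> integral\<^sup>L M (\<lambda>\<omega>. (real (X j \<omega>) + 1) * real (X j \<omega>) ^ e j) = measure_pmf.expectation (poisson_pmf (1 / real j)) (\<lambda>n. (real n + 1) * real n ^ e j)" using transfer[OF j pg(1)] by simp
    then show ?thesis using pg(2) unfolding Z_def by auto
  qed
  have intG: "integrable M G"
    unfolding G_eq by (rule P.indep_vars_integrable[OF fJ indZ]) (use Zj in blast)
  have EG: "integral\<^sup>L M G = (\<Prod>j\<in>J. integral\<^sup>L M (Z j))"
    unfolding G_eq by (rule P.indep_vars_lebesgue_integral[OF fJ indZ]) (use Zj in blast)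

  define bnd where "bnd \<omega> = 1 + (\<Sum>j\<in>K. real j * real (X j \<omega>))" for \<omega>
  have int_bnd: "integrable M bnd"
  proof -
    have "integrable M (\<lambda>\<omega>. real (X j \<omega>))" if "j \<in> K" for j
    proof -
      have j: "j \<ge> 1" using that K1 by auto
      show ?thesis using transfer[OF j poisson_integrable[OF lam[OF j], of 1]] by simp
    qed
    then show ?thesis unfolding bnd_def by (intro Bochner_Integration.integrable_add integrable_sum) auto
  qed
  have card_bnd: "Lc c \<le> 1 + (\<Sum>j\<in>K. real j * real (c j))" for c
  proof -
    have "Lc c \<le> real (1 + (\<Sum>j=1..k. j * c j))" unfolding Lc_def using card_Lset_le[of k c] by linarith
    then show ?thesis by (simp add: K_def)
  qed
  have L_eq: "L = FK \<circ> YK"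
    by (auto simp: L_def FK_def Lc_def YK_def K_def fun_eq_iff intro!: arg_cong[where f=card] Lset_cong)
  have L0_le_bnd: "L0 \<omega> \<le> bnd \<omega>" for \<omega>
  proof -
    have "L0 \<omega> \<le> 1 + (\<Sum>j\<in>K. real j * real (if j \<in> B then YB \<omega> j else 0))"
      unfolding L0_def FB_def by (rule card_bnd)
    also have "\<dots> \<le> bnd \<omega>" unfolding bnd_def by (intro add_left_mono sum_mono) (auto simp: YB_def)
    finally show ?thesis .
  qed
  have L_le_bnd: "L \<omega> \<le> bnd \<omega>" for \<omega>
    using card_bnd[of "\<lambda>j. X j \<omega>"] by (simp add: L_def Lc_def bnd_def)
  have intL0: "integrable M L0"
  proof (rule Bochner_Integration.integrable_bound[OF int_bnd])
    show "L0 \<in> borel_measurable M" unfolding L0_def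
      by (rule measurable_compose[OF measY(2) meas_fin[OF fB]])
    show "AE x in M. norm (L0 x) \<le> norm (bnd x)"
      using L0_le_bnd by (auto simp: L0_def FB_def Lc_def intro!: AE_I2 order_trans[OF _ abs_ge_self])
  qed
  have intL: "integrable M L"
  proof (rule Bochner_Integration.integrable_bound[OF int_bnd])
    show "L \<in> borel_measurable M" unfolding L_eq comp_def
      by (rule measurable_compose[OF measY(3) meas_fin[OF fK]])
    show "AE x in M. norm (L x) \<le> norm (bnd x)"
      using L_le_bnd by (auto simp: L_def intro!: AE_I2 order_trans[OF _ abs_ge_self])
  qed

  have intGL0: "integrable M (\<lambda>\<omega>. G \<omega> * L0 \<omega>)"
    using P.indep_var_integrable[OF indGL] intG intL0 unfolding comp_def G_def[abs_def] L0_def[abs_def] by simp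
  have EGL0: "integral\<^sup>L M (\<lambda>\<omega>. G \<omega> * L0 \<omega>) = integral\<^sup>L M G * integral\<^sup>L M L0"
    using P.indep_var_lebesgue_integral[OF indGL] intG intL0 unfolding comp_def G_def[abs_def] L0_def[abs_def] by simp


  have prod_re: "(\<Prod>i<h. f (js i)) = (\<Prod>j\<in>J. f j)" for f :: "nat \<Rightarrow> real"
    unfolding J_def by (simp add: prod.reindex[OF assms(6)])
  have pw: "LHS \<omega> \<le> G \<omega> * L0 \<omega>" for \<omega>
  proof -
    define c where "c j = X j \<omega>" for j
    have "Lset k (\<lambda>j. if j \<in> J then 0 else c j) = Lset k (\<lambda>j. if j \<in> B then YB \<omega> j else 0)"
      by (rule Lset_cong) (auto simp: c_def YB_def B_def K_def)
    then have L0c: "L0 \<omega> = real (card (Lset k (\<lambda>j. if j \<in> J then 0 else c j)))"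
      by (simp add: L0_def FB_def Lc_def)
    have "real (card (Lset k c)) \<le> real ((\<Prod>j\<in>J. c j + 1) * card (Lset k (\<lambda>j. if j \<in> J then 0 else c j)))"
      using card_Lset_split[of J k c] JK unfolding K_def by (intro of_nat_mono) blast
    also have "\<dots> = (\<Prod>j\<in>J. real (c j) + 1) * L0 \<omega>"
      by (simp add: L0c of_nat_prod add.commute)
    finally have 1: "real (card (Lset k c)) \<le> (\<Prod>j\<in>J. real (c j) + 1) * L0 \<omega>" .
    have "LHS \<omega> = real (card (Lset k c)) * (\<Prod>j\<in>J. real (c j) ^ e j)"
      unfolding LHS_def c_def using prod_re[of "\<lambda>j. real (X j \<omega>) ^ e j"]
      by (simp add: e_js)
    also have "\<dots> \<le> ((\<Prod>j\<in>J. real (c j) + 1) * L0 \<omega>) * (\<Prod>j\<in>J. real (c j) ^ e j)"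
      by (rule mult_right_mono[OF 1]) (simp add: prod_nonneg)
    also have "\<dots> = G \<omega> * L0 \<omega>"
      by (simp add: G_def GJ_def YJ_def c_def prod.distrib[symmetric] algebra_simps cong: prod.cong)
    finally show ?thesis .
  qed
  have LHS_nn: "0 \<le> LHS \<omega>" for \<omega> unfolding LHS_def by (simp add: prod_nonneg)
  have LHS_eq: "LHS = HK \<circ> YK"
  proof
    fix \<omega>
    have "Lset k (\<lambda>j. X j \<omega>) = Lset k (\<lambda>j. if j \<in> K then YK \<omega> j else 0)"
      by (rule Lset_cong) (auto simp: YK_def K_def)
    moreover have "(\<Prod>i<h. real (X (js i) \<omega>) ^ as i) = (\<Prod>i<h. real (YK \<omega> (js i)) ^ as i)"
      using assms(7) by (intro prod.cong) (auto simp: YK_def K_def)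
    ultimately show "LHS \<omega> = (HK \<circ> YK) \<omega>" by (simp add: LHS_def HK_def Lc_def)
  qed
  have intLHS: "integrable M LHS"
  proof (rule Bochner_Integration.integrable_bound[OF intGL0])
    show "LHS \<in> borel_measurable M" unfolding LHS_eq
      by (rule measurable_comp[OF measY(3) meas_fin[OF fK]])
    show "AE x in M. norm (LHS x) \<le> norm (G x * L0 x)"
      using pw LHS_nn by (auto intro!: AE_I2 order_trans[OF _ abs_ge_self])
  qed
  have E1: "integral\<^sup>L M LHS \<le> integral\<^sup>L M G * integral\<^sup>L M L0"
    unfolding EGL0[symmetric] by (rule integral_mono[OF intLHS intGL0 pw])
  have E2: "integral\<^sup>L M L0 \<le> integral\<^sup>L M L"
  proof (rule integral_mono[OF intL0 intL])
    fix \<omega>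
    have "Lset k (\<lambda>j. if j \<in> B then YB \<omega> j else 0) \<subseteq> Lset k (\<lambda>j. X j \<omega>)"
      by (rule Lset_mono) (auto simp: YB_def)
    then show "L0 \<omega> \<le> L \<omega>"
      by (simp add: L0_def FB_def Lc_def L_def card_mono[OF Lset_finite])
  qed
  have E0: "0 \<le> integral\<^sup>L M L0" by (rule Bochner_Integration.integral_nonneg) (simp add: L0_def FB_def Lc_def)
  define C where "C = (\<Prod>j\<in>J. 1 / real j * (Bell (e j) + Bell (e j + 1)))"
  have E3: "integral\<^sup>L M G \<le> C"
    unfolding EG C_def
  proof (rule prod_mono)
    fix j assume "j \<in> J"
    then show "0 \<le> integral\<^sup>L M (Z j) \<and> integral\<^sup>L M (Z j) \<le> 1 / real j * (Bell (e j) + Bell (e j + 1))"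
      using Zj by (auto intro!: Bochner_Integration.integral_nonneg simp: Z_def)
  qed
  have EGnn: "0 \<le> integral\<^sup>L M G"
    unfolding G_eq by (rule Bochner_Integration.integral_nonneg) (auto simp: Z_def prod_nonneg)
  have C_eq: "C = (\<Prod>i<h. Bell (as i) + Bell (as i + 1)) / (\<Prod>i<h. real (js i))"
  proof -
    have "C = (\<Prod>i<h. 1 / real (js i) * (Bell (e (js i)) + Bell (e (js i) + 1)))"
      unfolding C_def by (rule prod_re[symmetric])
    also have "\<dots> = (\<Prod>i<h. 1 / real (js i) * (Bell (as i) + Bell (as i + 1)))"
      by (intro prod.cong) (auto simp: e_js)
    also have "\<dots> = (\<Prod>i<h. Bell (as i) + Bell (as i + 1)) / (\<Prod>i<h. real (js i))"
      by (simp add: prod.distrib prod_dividef)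
    finally show ?thesis .
  qed
  have "integral\<^sup>L M LHS \<le> C * integral\<^sup>L M L"
    using E1 mult_mono[OF E3 E2 order_trans[OF EGnn E3] E0] by linarith
  then show ?thesis unfolding C_eq LHS_def[abs_def] L_def[abs_def] .
qed

end
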